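(* (a) If $\tau\in\mathcal{T}$ and the space $(\mathbb{R},\tau)$ is connected and locally connected, then $\tau=\eta$. (b) More precisely: if $\xi\in\Gamma(\tau)$ for some $\tau\in\mathcal{T}$ and $(\mathbb{R},\tau)$ is connected, then $\xi$ does not have a local basis consisting of connected sets in the space $(\mathbb{R},\tau)$.
   Context: $\eta$ denotes the Euclidean topology on $\mathbb{R}$; $\mathcal{T}$ is the family of all topologies on $\mathbb{R}$ finer than $\eta$. $\mathcal{U}_\tau(x)$ is the neighborhood filter of $x$ in topology $\tau$, and $\Gamma(\tau)=\{x\in\mathbb{R}:\mathcal{U}_\eta(x)\neq\mathcal{U}_\tau(x)\}$ (the points where $\tau$ is strictly finer than $\eta$). *)

theory Defs
  imports "HOL-Analysis.Analysis"
begin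

definition finer_than_euclidean :: "real topology \<Rightarrow> bool" where
  "finer_than_euclidean \<tau> \<longleftrightarrow> topspace \<tau> = UNIV \<and> (\<forall>U. open U \<longrightarrow> openin \<tau> U)"

definition nhds_sets :: "'a topology \<Rightarrow> 'a \<Rightarrow> 'a set set" where
  "nhds_sets \<tau> x = {N. \<exists>U. openin \<tau> U \<and> x \<in> U \<and> U \<subseteq> N}"

text \<open>Gamma(tau): points where the neighbourhood filters of eta and tau differ.\<close>
definition Gamma_set :: "real topology \<Rightarrow> real set" where
  "Gamma_set \<tau> = {x. nhds_sets euclideanreal x \<noteq> nhds_sets \<tau> x}"

definition has_connected_local_basis :: "'a topology \<Rightarrow> 'a \<Rightarrow> bool" where
  "has_connected_local_basis \<tau> x \<longleftrightarrow>
     (\<exists>B. B \<subseteq> nhds_sets \<tau> x \<and> (\<forall>C\<in>B. connectedin \<tau> C) \<and>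
          (\<forall>N\<in>nhds_sets \<tau> x. \<exists>C\<in>B. C \<subseteq> N))"

end

theory Submission
  imports Defs
begin

lemma core:
  fixes \<tau> :: "real topology" and \<xi> :: real
  assumes fin: "finer_than_euclidean \<tau>" and con: "connected_space \<tau>"
    and U: "openin \<tau> U" "\<xi> \<in> U" and nb: "\<not> (\<exists>e>0. ball \<xi> e \<subseteq> U)"
    and C: "C \<subseteq> U" "connectedin \<tau> C"
    and V: "openin \<tau> V" "\<xi> \<in> V" "V \<subseteq> C"
  shows False
proof -
  have top: "topspace \<tau> = UNIV" and op: "\<And>S. open S \<Longrightarrow> openin \<tau> S"
    using fin unfolding finer_than_euclidean_def by auto
  have cm: "continuous_map \<tau> euclideanreal id"
    unfolding continuous_map_def using top op by (auto simp: vimage_def)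
  have "connectedin euclideanreal (id ` C)"
    by (rule connectedin_continuous_map_image[OF cm C(2)])
  hence cC: "connected C" by simp
  have side: "C \<subseteq> {\<xi>..} \<or> C \<subseteq> {..\<xi>}"
  proof (rule ccontr)
    assume "\<not> ?thesis"
    then obtain a b where ab: "a \<in> C" "b \<in> C" "a < \<xi>" "\<xi> < b" by force
    have "{a..b} \<subseteq> C" using connected_contains_Icc[OF cC ab(1,2)] .
    moreover have "ball \<xi> (min (\<xi> - a) (b - \<xi>)) \<subseteq> {a..b}"
      by (auto simp: ball_def dist_real_def)
    ultimately have "ball \<xi> (min (\<xi> - a) (b - \<xi>)) \<subseteq> U" using C(1) by blast
    moreover have "min (\<xi> - a) (b - \<xi>) > 0" using ab by simp
    ultimately show False using nb by blast
  qed
  show False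
  proof (cases "C \<subseteq> {\<xi>..}")
    case True
    have o1: "openin \<tau> {..<\<xi>}" by (rule op) simp
    have o2: "openin \<tau> (V \<union> {\<xi><..})" using V(1) op[of "{\<xi><..}"] by auto
    have "topspace \<tau> \<subseteq> {..<\<xi>} \<union> (V \<union> {\<xi><..})"
    proof
      fix x show "x \<in> {..<\<xi>} \<union> (V \<union> {\<xi><..})" using V(2) by (cases x \<xi> rule: linorder_cases) auto
    qed
    moreover have "{..<\<xi>} \<inter> (V \<union> {\<xi><..}) = {}" using True V(3) by auto
    moreover have "{..<\<xi>} \<noteq> {}" by (metis lessThan_iff lt_ex empty_iff)
    moreover have "V \<union> {\<xi><..} \<noteq> {}" using V(2) by auto
    ultimately show False using con o1 o2 unfolding connected_space_def by blast
  next
    case False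
    hence F: "C \<subseteq> {..\<xi>}" using side by blast
    have o1: "openin \<tau> {\<xi><..}" by (rule op) simp
    have o2: "openin \<tau> (V \<union> {..<\<xi>})" using V(1) op[of "{..<\<xi>}"] by auto
    have "topspace \<tau> \<subseteq> {\<xi><..} \<union> (V \<union> {..<\<xi>})"
    proof
      fix x show "x \<in> {\<xi><..} \<union> (V \<union> {..<\<xi>})" using V(2) by (cases x \<xi> rule: linorder_cases) auto
    qed
    moreover have "{\<xi><..} \<inter> (V \<union> {..<\<xi>}) = {}" using F V(3) by auto
    moreover have "{\<xi><..} \<noteq> {}" by (metis greaterThan_iff gt_ex empty_iff)
    moreover have "V \<union> {..<\<xi>} \<noteq> {}" using V(2) by auto
    ultimately show False using con o1 o2 unfolding connected_space_def by blast
  qed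
qed

theorem proposition1:
  shows "(\<forall>\<tau>. finer_than_euclidean \<tau> \<and> connected_space \<tau> \<and> locally_connected_space \<tau>
            \<longrightarrow> \<tau> = euclideanreal)
       \<and> (\<forall>\<tau> \<xi>. finer_than_euclidean \<tau> \<and> \<xi> \<in> Gamma_set \<tau> \<and> connected_space \<tau>
            \<longrightarrow> \<not> has_connected_local_basis \<tau> \<xi>)"
proof (intro conjI allI impI)
  fix \<tau> :: "real topology"
  assume a: "finer_than_euclidean \<tau> \<and> connected_space \<tau> \<and> locally_connected_space \<tau>"
  have op: "\<And>S. open S \<Longrightarrow> openin \<tau> S"
    using a unfolding finer_than_euclidean_def by auto
  show "\<tau> = euclideanreal"
    unfolding topology_eq
  proof (intro allI iffI)
    fix S assume "openin euclideanreal S" thus "openin \<tau> S" using op by simp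
  next
    fix S assume S: "openin \<tau> S"
    show "openin euclideanreal S"
    proof (rule ccontr)
      assume "\<not> openin euclideanreal S"
      then obtain \<xi> where x: "\<xi> \<in> S" "\<not> (\<exists>e>0. ball \<xi> e \<subseteq> S)"
        by (auto simp: open_contains_ball)
      from a have "locally_connected_space \<tau>" by blast
      then obtain V C where "openin \<tau> V" "connectedin \<tau> C" "\<xi> \<in> V" "V \<subseteq> C" "C \<subseteq> S"
        using S x(1) unfolding locally_connected_space_def neighbourhood_base_of by blast
      thus False using core[of \<tau> S \<xi> C V] a S x by blast
    qed
  qed
next
  fix \<tau> :: "real topology" and \<xi> :: real
  assume a: "finer_than_euclidean \<tau> \<and> \<xi> \<in> Gamma_set \<tau> \<and> connected_space \<tau>"
  have op: "\<And>S. open S \<Longrightarrow> openin \<tau> S"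
    using a unfolding finer_than_euclidean_def by auto
  have sub: "nhds_sets euclideanreal \<xi> \<subseteq> nhds_sets \<tau> \<xi>"
    unfolding nhds_sets_def using op by auto
  then obtain N where N: "N \<in> nhds_sets \<tau> \<xi>" "N \<notin> nhds_sets euclideanreal \<xi>"
    using a unfolding Gamma_set_def by blast
  then obtain U where U: "openin \<tau> U" "\<xi> \<in> U" "U \<subseteq> N" unfolding nhds_sets_def by blast
  have nb: "\<not> (\<exists>e>0. ball \<xi> e \<subseteq> U)"
  proof
    assume "\<exists>e>0. ball \<xi> e \<subseteq> U"
    then obtain e where "e > 0" "ball \<xi> e \<subseteq> U" by blast
    hence "N \<in> nhds_sets euclideanreal \<xi>" unfolding nhds_sets_def
      using U(3) by (intro CollectI exI[of _ "ball \<xi> e"]) auto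
    thus False using N(2) by blast
  qed
  show "\<not> has_connected_local_basis \<tau> \<xi>"
  proof
    assume "has_connected_local_basis \<tau> \<xi>"
    then obtain B where B: "B \<subseteq> nhds_sets \<tau> \<xi>" "\<forall>C\<in>B. connectedin \<tau> C"
      "\<forall>N\<in>nhds_sets \<tau> \<xi>. \<exists>C\<in>B. C \<subseteq> N" unfolding has_connected_local_basis_def by blast
    have "U \<in> nhds_sets \<tau> \<xi>" unfolding nhds_sets_def using U by blast
    then obtain C where C: "C \<in> B" "C \<subseteq> U" using B(3) by blast
    then obtain V where V: "openin \<tau> V" "\<xi> \<in> V" "V \<subseteq> C"
      using B(1) unfolding nhds_sets_def by blast
    show False using core[of \<tau> U \<xi> C V] a U nb C B(2) V by blast
  qed
qed

end
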